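(* Let $X$ be a regular topological space and let $\mathcal A\subseteq\mathcal P(X)$. Put $\overline{\mathcal A}=\{\overline{A}:A\in\mathcal A\}$ (closures in $X$). Then $X$ is $\mathcal A$-selectively pseudocompact if and only if $X$ is $\overline{\mathcal A}$-selectively pseudocompact.
   Context: For a topological space $X$ and $\mathcal A\subseteq\mathcal P(X)$, $X$ is called $\mathcal A$-selectively pseudocompact if for every sequence $\langle U_n:n\in\omega\rangle$ of pairwise disjoint non-empty open subsets of $X$ one can choose sets $A_n\in\mathcal A$ with $A_n\subseteq U_n$ such that the family $\{A_n:n\in\omega\}$ has an accumulation point, i.e. it is not locally finite: there is a point $x\in X$ every neighbourhood of which meets $A_n$ for infinitely many $n$. *)

theory Defs
  imports "HOL-Analysis.Analysis"
begin

definition acc_point_family :: "'a topology \<Rightarrow> (nat \<Rightarrow> 'a set) \<Rightarrow> 'a \<Rightarrow> bool" where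
  "acc_point_family X A x \<longleftrightarrow> x \<in> topspace X \<and>
     (\<forall>V. openin X V \<and> x \<in> V \<longrightarrow> infinite {n. A n \<inter> V \<noteq> {}})"

definition selectively_pseudocompact :: "'a topology \<Rightarrow> 'a set set \<Rightarrow> bool" where
  "selectively_pseudocompact X \<A> \<longleftrightarrow>
     (\<forall>U :: nat \<Rightarrow> 'a set.
        (\<forall>n. openin X (U n) \<and> U n \<noteq> {}) \<and> pairwise (\<lambda>m n. disjnt (U m) (U n)) UNIV
        \<longrightarrow> (\<exists>A. (\<forall>n. A n \<in> \<A> \<and> A n \<subseteq> U n) \<and> (\<exists>x. acc_point_family X A x)))"

end

theory Submission
  imports Defs
begin

lemma shrink_open:
  assumes "regular_space X" "openin X W" "W \<noteq> {}"
  shows "\<exists>V. openin X V \<and> V \<noteq> {} \<and> X closure_of V \<subseteq> W"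
proof -
  obtain a where a: "a \<in> W" using assms(3) by blast
  have aT: "a \<in> topspace X" using a assms(2) openin_subset by blast
  have "closedin X (topspace X - W)" using assms(2) by blast
  then obtain U where U: "openin X U" "a \<in> U" "disjnt (topspace X - W) (X closure_of U)"
    using assms(1) a aT unfolding regular_space by blast
  have "X closure_of U \<subseteq> W"
    using U(3) closure_of_subset_topspace[of X U] unfolding disjnt_def by blast
  then show ?thesis using U by blast
qed

lemma acc_mono:
  assumes "\<And>n. A n \<subseteq> B n" "acc_point_family X A x"
  shows "acc_point_family X B x"
  unfolding acc_point_family_def
proof (intro conjI allI impI)
  show "x \<in> topspace X" using assms(2) unfolding acc_point_family_def by blast
  fix V assume V: "openin X V \<and> x \<in> V"
  have "infinite {n. A n \<inter> V \<noteq> {}}" using assms(2) V unfolding acc_point_family_def by blast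
  moreover have "{n. A n \<inter> V \<noteq> {}} \<subseteq> {n. B n \<inter> V \<noteq> {}}" using assms(1) by blast
  ultimately show "infinite {n. B n \<inter> V \<noteq> {}}" using infinite_super by blast
qed

lemma acc_closure:
  assumes "acc_point_family X (\<lambda>n. X closure_of A n) x"
  shows "acc_point_family X A x"
  unfolding acc_point_family_def
proof (intro conjI allI impI)
  show "x \<in> topspace X" using assms unfolding acc_point_family_def by blast
  fix V assume V: "openin X V \<and> x \<in> V"
  have "infinite {n. X closure_of A n \<inter> V \<noteq> {}}" using assms V unfolding acc_point_family_def by blast
  moreover have "{n. X closure_of A n \<inter> V \<noteq> {}} = {n. A n \<inter> V \<noteq> {}}"
    using openin_Int_closure_of_eq_empty[of X V] V by (auto simp: Int_commute)
  ultimately show "infinite {n. A n \<inter> V \<noteq> {}}" by simp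
qed

lemma shrink_seq:
  fixes U :: "nat \<Rightarrow> 'a set"
  assumes "regular_space X" "\<forall>n. openin X (U n) \<and> U n \<noteq> {}"
    "pairwise (\<lambda>m n. disjnt (U m) (U n)) UNIV"
  obtains V where "\<forall>n. openin X (V n) \<and> V n \<noteq> {}"
    "pairwise (\<lambda>m n. disjnt (V m) (V n)) UNIV" "\<And>n. X closure_of V n \<subseteq> U n"
proof -
  have "\<forall>n. \<exists>V. openin X V \<and> V \<noteq> {} \<and> X closure_of V \<subseteq> U n"
  proof
    fix n show "\<exists>V. openin X V \<and> V \<noteq> {} \<and> X closure_of V \<subseteq> U n"
      using shrink_open[OF assms(1)] assms(2) by simp
  qed
  then have "\<exists>V. \<forall>n. openin X (V n) \<and> V n \<noteq> {} \<and> X closure_of V n \<subseteq> U n"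
    by (rule choice)
  then obtain V where V: "\<forall>n. openin X (V n) \<and> V n \<noteq> {} \<and> X closure_of V n \<subseteq> U n"
    by blast
  have sub: "V n \<subseteq> U n" for n
  proof -
    have "V n \<subseteq> topspace X" using V openin_subset by blast
    then have "V n \<subseteq> X closure_of V n" by (rule closure_of_subset)
    then show ?thesis using V by blast
  qed
  have p: "pairwise (\<lambda>m n. disjnt (V m) (V n)) UNIV"
    unfolding pairwise_def disjnt_def
  proof (intro ballI impI)
    fix m n :: nat assume "m \<noteq> n"
    then have "U m \<inter> U n = {}" using assms(3) unfolding pairwise_def disjnt_def by simp
    then show "V m \<inter> V n = {}" using sub[of m] sub[of n] by blast
  qed
  show ?thesis
  proof (rule that)
    show "\<forall>n. openin X (V n) \<and> V n \<noteq> {}" using V by simp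
    show "pairwise (\<lambda>m n. disjnt (V m) (V n)) UNIV" by (rule p)
    show "X closure_of V n \<subseteq> U n" for n using V by simp
  qed
qed

theorem lemma1p3:
  fixes X :: "'a topology" and \<A> :: "'a set set"
  assumes "regular_space X"
    and "\<A> \<subseteq> Pow (topspace X)"
  shows "selectively_pseudocompact X \<A> \<longleftrightarrow>
         selectively_pseudocompact X ((\<lambda>A. X closure_of A) ` \<A>)"
proof
  assume H: "selectively_pseudocompact X \<A>"
  show "selectively_pseudocompact X ((\<lambda>A. X closure_of A) ` \<A>)"
    unfolding selectively_pseudocompact_def
  proof (intro allI impI)
    fix U :: "nat \<Rightarrow> 'a set"
    assume U: "(\<forall>n. openin X (U n) \<and> U n \<noteq> {}) \<and> pairwise (\<lambda>m n. disjnt (U m) (U n)) UNIV"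
    obtain V where V: "\<forall>n. openin X (V n) \<and> V n \<noteq> {}"
      "pairwise (\<lambda>m n. disjnt (V m) (V n)) UNIV" "\<And>n. X closure_of V n \<subseteq> U n"
      using shrink_seq[OF assms(1)] U by metis
    obtain A x where A: "\<forall>n. A n \<in> \<A> \<and> A n \<subseteq> V n" "acc_point_family X A x"
      using H[unfolded selectively_pseudocompact_def, rule_format, OF conjI[OF V(1) V(2)]] by blast
    have c1: "X closure_of A n \<in> (\<lambda>A. X closure_of A) ` \<A> \<and> X closure_of A n \<subseteq> U n" for n
    proof
      show "X closure_of A n \<in> (\<lambda>A. X closure_of A) ` \<A>" using A(1) by blast
      have "A n \<subseteq> V n" using A(1) by blast
      then have "X closure_of A n \<subseteq> X closure_of V n" by (rule closure_of_mono)
      then show "X closure_of A n \<subseteq> U n" using V(3)[of n] by (rule subset_trans)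
    qed
    have sub: "A n \<subseteq> X closure_of A n" for n
    proof -
      have "A n \<subseteq> topspace X" using A(1) assms(2) by blast
      then show ?thesis by (rule closure_of_subset)
    qed
    have c2: "acc_point_family X (\<lambda>n. X closure_of A n) x"
      by (rule acc_mono[OF sub A(2)])
    show "\<exists>A. (\<forall>n. A n \<in> (\<lambda>A. X closure_of A) ` \<A> \<and> A n \<subseteq> U n) \<and> (\<exists>x. acc_point_family X A x)"
    proof (rule exI[of _ "\<lambda>n. X closure_of A n"], rule conjI)
      show "\<forall>n. X closure_of A n \<in> (\<lambda>A. X closure_of A) ` \<A> \<and> X closure_of A n \<subseteq> U n" using c1 by simp
      show "\<exists>x. acc_point_family X (\<lambda>n. X closure_of A n) x" using c2 by (rule exI)
    qed
  qed
next
  assume H: "selectively_pseudocompact X ((\<lambda>A. X closure_of A) ` \<A>)"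
  show "selectively_pseudocompact X \<A>"
    unfolding selectively_pseudocompact_def
  proof (intro allI impI)
    fix U :: "nat \<Rightarrow> 'a set"
    assume U: "(\<forall>n. openin X (U n) \<and> U n \<noteq> {}) \<and> pairwise (\<lambda>m n. disjnt (U m) (U n)) UNIV"
    obtain B x where B: "\<forall>n. B n \<in> (\<lambda>A. X closure_of A) ` \<A> \<and> B n \<subseteq> U n" "acc_point_family X B x"
      using H[unfolded selectively_pseudocompact_def, rule_format, OF U] by blast
    have "\<forall>n. \<exists>A. A \<in> \<A> \<and> B n = X closure_of A" using B(1) by blast
    then have "\<exists>A. \<forall>n. A n \<in> \<A> \<and> B n = X closure_of A n" by (rule choice)
    then obtain A where A: "\<forall>n. A n \<in> \<A> \<and> B n = X closure_of A n" by blast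
    have d1: "A n \<in> \<A> \<and> A n \<subseteq> U n" for n
    proof
      show "A n \<in> \<A>" using A by blast
      have "A n \<subseteq> topspace X" using A assms(2) by blast
      then have "A n \<subseteq> X closure_of A n" by (rule closure_of_subset)
      also have "\<dots> = B n" using A by simp
      also have "\<dots> \<subseteq> U n" using B(1) by blast
      finally show "A n \<subseteq> U n" .
    qed
    have "B = (\<lambda>n. X closure_of A n)" using A by (intro ext) simp
    then have d2: "acc_point_family X A x"
      using acc_closure[of X A x] B(2) by simp
    show "\<exists>A. (\<forall>n. A n \<in> \<A> \<and> A n \<subseteq> U n) \<and> (\<exists>x. acc_point_family X A x)"
    proof (rule exI[of _ A], rule conjI)
      show "\<forall>n. A n \<in> \<A> \<and> A n \<subseteq> U n" using d1 by simp
      show "\<exists>x. acc_point_family X A x" using d2 by (rule exI)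
    qed
  qed
qed

end
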